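(* Let $G$ be a countable group, $\mu$ a probability measure on $G$, and $(X,\xi)$ a $(G,\mu)$-stationary space. Then the map \[ [2,\infty)\to[0,\infty),\qquad p\mapsto-p\log\langle\pi_{q,X}(\mu)1,1\rangle, \] where $q$ is the conjugate exponent of $p$, is increasing and bounded by $h_\mu(X,\xi)$. If in addition $\mu$ is non-degenerate, then \[ \lim_{p\to\infty}-p\log\langle\pi_{q,X}(\mu)1,1\rangle=h_\mu(X,\xi). \]
   Context: A $(G,\mu)$-stationary space is a standard probability space $(X,\xi)$ with a measurable non-singular $G$-action such that $\sum_s\mu(s)\xi(s^{-1}A)=\xi(A)$ for measurable $A$. Write $(s\xi)(A)=\xi(s^{-1}A)$ and $\rho(s,x)=\frac{d(s^{-1}\xi)}{d\xi}(x)$. For $1\le r<\infty$, the $L^r$-Koopman representation is $[\pi_{r,X}(s)f](x)=\big[\frac{d(s\xi)}{d\xi}(x)\big]^{1/r}f(s^{-1}x)$ on $L^r(X,\xi)$, and $\pi_{r,X}(\mu)=\sum_s\mu(s)\pi_{r,X}(s)$. The pairing is $\langle f,g\rangle=\int f\bar g\,d\xi$; one has $\langle\pi_{q,X}(\mu)1,1\rangle=\sum_s\mu(s)\int_X\rho(s,x)^{1/p}d\xi(x)$. The Furstenberg entropy is $h_\mu(X,\xi)=-\sum_s\mu(s)\int_X\log\rho(s,x)d\xi(x)$. $\mu$ is non-degenerate if its support generates $G$ as a semigroup. *)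

theory Defs
  imports "HOL-Probability.Probability"
begin

text \<open>Groups are written additively via the type class group_add (not assumed
commutative): the identity is 0, the product s t is s + t, the inverse of s is - s.\<close>

definition group_action :: "'x measure \<Rightarrow> ('g::group_add \<Rightarrow> 'x \<Rightarrow> 'x) \<Rightarrow> bool" where
  "group_action M act \<longleftrightarrow>
     (\<forall>x\<in>space M. act 0 x = x) \<and>
     (\<forall>s t. \<forall>x\<in>space M. act (s + t) x = act s (act t x)) \<and>
     (\<forall>s. act s \<in> measurable M M)"

definition push :: "'x measure \<Rightarrow> ('g \<Rightarrow> 'x \<Rightarrow> 'x) \<Rightarrow> 'g \<Rightarrow> 'x measure" where
  "push M act s = distr M M (act s)"

definition nonsingular_action :: "'x measure \<Rightarrow> ('g::group_add \<Rightarrow> 'x \<Rightarrow> 'x) \<Rightarrow> bool" where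
  "nonsingular_action M act \<longleftrightarrow>
     group_action M act \<and>
     (\<forall>s. absolutely_continuous M (push M act s) \<and> absolutely_continuous (push M act s) M)"

definition standard_prob_space :: "'x::polish_space measure \<Rightarrow> bool" where
  "standard_prob_space M \<longleftrightarrow> prob_space M \<and> sets M = sets (borel :: 'x measure)"

definition stationary_space ::
    "'g::{group_add,countable} pmf \<Rightarrow> 'x::polish_space measure \<Rightarrow> ('g \<Rightarrow> 'x \<Rightarrow> 'x) \<Rightarrow> bool" where
  "stationary_space \<mu> M act \<longleftrightarrow>
     standard_prob_space M \<and> nonsingular_action M act \<and>
     (\<forall>A\<in>sets M. (\<integral>s. measure M (act s -` A \<inter> space M) \<partial>measure_pmf \<mu>) = measure M A)"

definition rho :: "'x measure \<Rightarrow> ('g::group_add \<Rightarrow> 'x \<Rightarrow> 'x) \<Rightarrow> 'g \<Rightarrow> 'x \<Rightarrow> real" where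
  "rho M act s x = enn2real (RN_deriv M (push M act (- s)) x)"

definition koopman :: "'x measure \<Rightarrow> ('g::group_add \<Rightarrow> 'x \<Rightarrow> 'x) \<Rightarrow> real \<Rightarrow> 'g \<Rightarrow> ('x \<Rightarrow> real) \<Rightarrow> 'x \<Rightarrow> real" where
  "koopman M act r s f x = (enn2real (RN_deriv M (push M act s) x)) powr (1 / r) * f (act (- s) x)"

definition koopman_mu :: "'g::group_add pmf \<Rightarrow> 'x measure \<Rightarrow> ('g \<Rightarrow> 'x \<Rightarrow> 'x) \<Rightarrow> real \<Rightarrow> ('x \<Rightarrow> real) \<Rightarrow> 'x \<Rightarrow> real" where
  "koopman_mu \<mu> M act r f x = (\<integral>s. koopman M act r s f x \<partial>measure_pmf \<mu>)"

text \<open>The pairing <f,g> = integral of f * conj g (real-valued functions here).\<close>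
definition pairing :: "'x measure \<Rightarrow> ('x \<Rightarrow> real) \<Rightarrow> ('x \<Rightarrow> real) \<Rightarrow> real" where
  "pairing M f g = (\<integral>x. f x * g x \<partial>M)"

text \<open>Furstenberg entropy h = - sum_s mu(s) int log rho(s,x) d xi(x), as an extended real
  (Lebesgue integral of positive part minus negative part of -log rho over mu x xi).\<close>
definition furstenberg_entropy :: "'g::group_add pmf \<Rightarrow> 'x measure \<Rightarrow> ('g \<Rightarrow> 'x \<Rightarrow> 'x) \<Rightarrow> ereal" where
  "furstenberg_entropy \<mu> M act =
     enn2ereal (\<integral>\<^sup>+s. (\<integral>\<^sup>+x. ennreal (- ln (rho M act s x)) \<partial>M) \<partial>measure_pmf \<mu>)
   - enn2ereal (\<integral>\<^sup>+s. (\<integral>\<^sup>+x. ennreal (ln (rho M act s x)) \<partial>M) \<partial>measure_pmf \<mu>)"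

inductive_set semigroup_generated :: "'g::plus set \<Rightarrow> 'g set" for S where
  base: "s \<in> S \<Longrightarrow> s \<in> semigroup_generated S"
| plus: "a \<in> semigroup_generated S \<Longrightarrow> b \<in> semigroup_generated S \<Longrightarrow> a + b \<in> semigroup_generated S"

definition nondegenerate :: "'g::group_add pmf \<Rightarrow> bool" where
  "nondegenerate \<mu> \<longleftrightarrow> semigroup_generated (set_pmf \<mu>) = UNIV"

end

theory Submission
  imports Defs "HOL-Real_Asymp.Real_Asymp"
begin
lemma powr_le_1_plus:
  fixes y t :: real assumes "0 \<le> y" "0 < t" "t \<le> 1"
  shows "y powr t \<le> 1 + y"
proof (cases "y \<le> 1")
  case True
  then have "y powr t \<le> 1 powr t" using assms by (intro powr_mono2) auto
  then show ?thesis using assms by simp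
next
  case False
  then have "y powr t \<le> y powr 1" using assms by (intro powr_mono) auto
  then show ?thesis using False by simp
qed

lemma exp_chord:
  fixes L s t :: real assumes "0 < s" "s \<le> t"
  shows "(exp (s * L) - 1) / s \<le> (exp (t * L) - 1) / t"
proof -
  have c: "convex_on UNIV exp" by (rule exp_convex)
  define u where "u = s / t"
  have u: "0 < u" "u \<le> 1" using assms by (auto simp: u_def)
  have "exp ((1 - u) * 0 + u * (t * L)) \<le> (1 - u) * exp 0 + u * exp (t * L)"
    using convex_onD[OF c, of u 0 "t * L"] u by auto
  then have "exp (u * (t * L)) \<le> (1 - u) + u * exp (t * L)" by simp
  moreover have "u * (t * L) = s * L" using assms by (simp add: u_def)
  ultimately have "exp (s * L) \<le> (1 - u) + u * exp (t * L)" by metis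
  then have "exp (s * L) - 1 \<le> u * (exp (t * L) - 1)" by (simp add: algebra_simps)
  then show ?thesis using assms by (simp add: u_def field_simps)
qed

lemma lim_pow:
  fixes L :: real
  shows "(\<lambda>n::nat. real (n + 2) * (1 - exp (L / real (n + 2)))) \<longlonglongrightarrow> - L"
proof -
  have "((\<lambda>x::real. x * (1 - exp (L / x))) \<longlongrightarrow> - L) at_top"
    by real_asymp
  then show ?thesis
    by (rule filterlim_compose) (rule filterlim_subseq[of "\<lambda>n. n+2", THEN filterlim_compose[OF filterlim_real_sequentially]]; simp add: strict_mono_def)
qed

context prob_space begin

lemma powr_int:
  fixes Z :: "'a \<Rightarrow> real"
  assumes Z: "integrable M Z" "AE x in M. 0 \<le> Z x" and a: "0 < a" "a \<le> 1"
  shows "integrable M (\<lambda>x. Z x powr a)"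
proof -
  have 1: "integrable M (\<lambda>x. 1 + Z x)" using Z by auto
  have 2: "(\<lambda>x. Z x powr a) \<in> borel_measurable M" using Z(1) by measurable
  have 3: "AE x in M. norm (Z x powr a) \<le> norm (1 + Z x)"
    using Z(2) by eventually_elim (use powr_le_1_plus[OF _ a] in auto)
  show ?thesis by (rule Bochner_Integration.integrable_bound[OF 1 2 3])
qed

lemma powr_jensen:
  fixes Z :: "'a \<Rightarrow> real"
  assumes Z: "integrable M Z" "AE x in M. 0 < Z x" and a: "0 < a" "a \<le> 1"
  shows "expectation (\<lambda>x. Z x powr a) \<le> (expectation Z) powr a"
proof -
  have Zm: "Z \<in> borel_measurable M" using Z by auto
  have Z0: "AE x in M. 0 \<le> Z x" using Z(2) by eventually_elim auto
  let ?W = "\<lambda>x. Z x powr a"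
  have W: "integrable M ?W" by (rule powr_int[OF Z(1) Z0 a])
  have Wpos: "AE x in M. ?W x \<in> {0<..}" using Z(2) by eventually_elim auto
  have eq: "AE x in M. Z x = ?W x powr (1/a)"
    using Z(2) by eventually_elim (use a in \<open>auto simp: powr_powr\<close>)
  have Wm: "(\<lambda>x. ?W x powr (1/a)) \<in> borel_measurable M" using Zm by measurable
  have int2: "integrable M (\<lambda>x. ?W x powr (1/a))"
    using Z(1) integrable_cong_AE[OF Zm Wm eq] by simp
  have "(expectation ?W) powr (1/a) \<le> expectation (\<lambda>x. ?W x powr (1/a))"
    by (rule jensens_inequality[OF W Wpos, where q="\<lambda>x. x powr (1/a)"])
       (auto intro: int2 powr_convex simp: a)
  also have "\<dots> = expectation Z"
    using integral_cong_AE[OF Zm Wm eq] by simp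
  finally have 1: "(expectation ?W) powr (1/a) \<le> expectation Z" .
  have W0: "0 \<le> expectation ?W" by (rule integral_nonneg_AE) (use Z0 in auto)
  have "expectation ?W = ((expectation ?W) powr (1/a)) powr a"
    using a W0 by (simp add: powr_powr)
  also have "\<dots> \<le> (expectation Z) powr a"
    by (rule powr_mono2) (use a 1 in auto)
  finally show ?thesis .
qed

end

locale ysetup = prob_space +
  fixes Y :: "'a \<Rightarrow> real"
  assumes Ym[measurable]: "Y \<in> borel_measurable M" and Y0: "\<And>x. x \<in> space M \<Longrightarrow> 0 \<le> Y x"
    and Ypos: "AE x in M. 0 < Y x" and Yint: "integrable M Y" and Y1: "expectation Y = 1"
begin

definition phi where "phi t = expectation (\<lambda>x. Y x powr t)"
definition FF where "FF p = - p * ln (phi (1/p))"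

lemma Y0AE: "AE x in M. 0 \<le> Y x" using Y0 by auto

lemma phi_int: "0 < t \<Longrightarrow> t \<le> 1 \<Longrightarrow> integrable M (\<lambda>x. Y x powr t)"
  by (rule powr_int[OF Yint Y0AE])

lemma phi_pos: assumes "0 < t" "t \<le> 1" shows "0 < phi t"
proof -
  have "0 \<le> phi t" unfolding phi_def by (rule integral_nonneg_AE) auto
  moreover have "phi t \<noteq> 0"
  proof
    assume "phi t = 0"
    then have "AE x in M. Y x powr t = 0"
      using integral_nonneg_eq_0_iff_AE[OF phi_int[OF assms]] unfolding phi_def by auto
    with Ypos have "AE x in M. False" by eventually_elim auto
    then show False by simp
  qed
  ultimately show ?thesis by simp
qed

lemma phi1: "phi 1 = 1"
proof -
  have "phi 1 = expectation Y" unfolding phi_def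
    by (rule Bochner_Integration.integral_cong) (auto simp: Y0)
  then show ?thesis using Y1 by simp
qed

lemma phi_le: assumes "0 < s" "s \<le> t" "t \<le> 1" shows "phi s \<le> (phi t) powr (s / t)"
proof -
  have "expectation (\<lambda>x. (Y x powr t) powr (s / t)) \<le> (expectation (\<lambda>x. Y x powr t)) powr (s/t)"
    by (rule powr_jensen[OF phi_int]) (use assms Ypos in \<open>auto elim!: eventually_mono\<close>)
  moreover have "\<And>x. (Y x powr t) powr (s / t) = Y x powr s" using assms by (simp add: powr_powr)
  ultimately show ?thesis by (simp add: phi_def)
qed

lemma phi_le1: assumes "0 < t" "t \<le> 1" shows "phi t \<le> 1"
  using phi_le[OF assms(1) assms(2) order_refl] by (simp add: phi1)

lemma FF_nonneg: assumes "1 \<le> p" shows "0 \<le> FF p"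
proof -
  have "0 < phi (1/p)" "phi (1/p) \<le> 1" using assms by (auto intro!: phi_pos phi_le1)
  then have "ln (phi (1/p)) \<le> 0" by simp
  then have "p * ln (phi (1/p)) \<le> 0" using assms by (simp add: mult_nonneg_nonpos)
  then show ?thesis by (simp add: FF_def)
qed

lemma FF_mono: assumes "1 \<le> p" "p \<le> p'" shows "FF p \<le> FF p'"
proof -
  have le: "phi (1/p') \<le> (phi (1/p)) powr ((1/p') / (1/p))"
    using assms by (intro phi_le) (auto simp: field_simps)
  have pos: "0 < phi (1/p')" "0 < phi (1/p)" using assms by (auto intro!: phi_pos)
  have "ln (phi (1/p')) \<le> ln ((phi (1/p)) powr ((1/p') / (1/p)))"
    using le pos by (subst ln_le_cancel_iff) auto
  also have "\<dots> = (p / p') * ln (phi (1/p))" using pos assms by (simp add: ln_powr)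
  finally have "ln (phi (1/p')) \<le> (p / p') * ln (phi (1/p))" .
  then have "p' * ln (phi (1/p')) \<le> p' * ((p / p') * ln (phi (1/p)))"
    using assms by (intro mult_left_mono) auto
  then show ?thesis using assms by (simp add: FF_def)
qed

end

lemma ptw_ident:
  fixes y :: real assumes "0 < y"
  shows "ennreal (- ln y) + ennreal y = ennreal (- ln y + y - 1) + (1 + ennreal (ln y))"
proof -
  have l: "ln y \<le> y - 1" using ln_le_minus_one assms by auto
  show ?thesis
  proof (cases "0 \<le> ln y")
    case True
    then have "ennreal (- ln y) = 0" by (simp add: ennreal_neg)
    moreover have "ennreal (1 + ln y) = 1 + ennreal (ln y)" using True by simp
    moreover have "ennreal ((- ln y + y - 1) + (1 + ln y)) = ennreal (- ln y + y - 1) + ennreal (1 + ln y)"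
      using True l by (intro ennreal_plus) auto
    ultimately show ?thesis by simp
  next
    case False
    then have "ennreal (ln y) = 0" by (simp add: ennreal_neg)
    moreover have "ennreal ((- ln y + y - 1) + 1) = ennreal (- ln y + y - 1) + ennreal 1"
      using l by (intro ennreal_plus) auto
    moreover have "ennreal (- ln y + y) = ennreal (- ln y) + ennreal y"
      using False assms by (intro ennreal_plus) auto
    ultimately show ?thesis by simp
  qed
qed

context ysetup begin

definition CC where "CC = (\<integral>\<^sup>+x. ennreal (- ln (Y x) + Y x - 1) \<partial>M)"
definition hh where "hh = enn2ereal (\<integral>\<^sup>+x. ennreal (- ln (Y x)) \<partial>M) - enn2ereal (\<integral>\<^sup>+x. ennreal (ln (Y x)) \<partial>M)"

lemma nnY: "(\<integral>\<^sup>+x. ennreal (Y x) \<partial>M) = 1"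
  using nn_integral_eq_integral[OF Yint Y0AE] Y1 by simp

lemma hh_CC: "hh = enn2ereal CC"
proof -
  define A where "A = (\<integral>\<^sup>+x. ennreal (- ln (Y x)) \<partial>M)"
  define B where "B = (\<integral>\<^sup>+x. ennreal (ln (Y x)) \<partial>M)"
  have "(\<integral>\<^sup>+x. ennreal (- ln (Y x)) + ennreal (Y x) \<partial>M) =
        (\<integral>\<^sup>+x. ennreal (- ln (Y x) + Y x - 1) + (1 + ennreal (ln (Y x))) \<partial>M)"
    by (rule nn_integral_cong_AE, rule eventually_mono[OF Ypos], erule ptw_ident)
  then have eq: "A + 1 = CC + (1 + B)"
    by (simp add: nn_integral_add A_def B_def CC_def nnY emeasure_space_1)
  have "B \<le> (\<integral>\<^sup>+x. ennreal (Y x) \<partial>M)" unfolding B_def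
    by (rule nn_integral_mono_AE) (use Ypos in \<open>auto elim!: eventually_mono intro!: ennreal_leI
        simp: ln_less_self less_imp_le\<close>)
  then have "B \<le> 1" by (simp add: nnY)
  then obtain b where b: "B = ennreal b" "0 \<le> b" by (cases B) (auto simp: top_unique)
  show ?thesis
  proof (cases "A = \<top>")
    case True
    then have "CC + (1 + ennreal b) = \<top>" using eq b by simp
    then have "CC = \<top>" by (simp add: ennreal_add_eq_top)
    then show ?thesis using True b by (simp add: hh_def A_def[symmetric] B_def[symmetric])
  next
    case False
    then obtain a where a: "A = ennreal a" "0 \<le> a" by (cases A) auto
    have "CC \<noteq> \<top>" using eq a b by (auto simp: ennreal_plus[symmetric] simp del: ennreal_plus)
    then obtain c where c: "CC = ennreal c" "0 \<le> c" by (cases CC) auto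
    have "ennreal (a + 1) = ennreal (c + (1 + b))" using eq a b c
      by (simp add: ennreal_plus[symmetric] del: ennreal_plus)
    then have "a + 1 = c + (1 + b)" using a b c ennreal_inj
      by (metis add_nonneg_nonneg zero_le_one)
    then have "hh = ereal a - ereal b" using a b by (simp add: hh_def A_def[symmetric] B_def[symmetric] del: ennreal_plus)
    then show ?thesis using a b c \<open>a + 1 = c + (1 + b)\<close> by simp
  qed
qed

end

lemma mono_pw:
  fixes y a b :: real assumes "0 < y" "0 < a" "a \<le> b"
  shows "a * (1 - y powr (1/a)) \<le> b * (1 - y powr (1/b))"
proof -
  have "(exp (1/b * ln y) - 1) / (1/b) \<le> (exp (1/a * ln y) - 1) / (1/a)"
    using assms by (intro exp_chord) (auto simp: field_simps)
  moreover have "y powr (1/a) = exp (1/a * ln y)" "y powr (1/b) = exp (1/b * ln y)"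
    using assms by (auto simp: powr_def)
  ultimately show ?thesis by (simp add: algebra_simps)
qed

context ysetup begin

lemma FF_le: assumes "1 \<le> p" shows "ereal (FF p) \<le> enn2ereal CC"
proof (cases "CC = \<top>")
  case True then show ?thesis by simp
next
  case False
  then obtain c where c: "CC = ennreal c" "0 \<le> c" by (cases CC) auto
  define g where "g x = - ln (Y x) + Y x - 1" for x
  have gm[measurable]: "g \<in> borel_measurable M" unfolding g_def by measurable
  have g0: "AE x in M. 0 \<le> g x"
    using Ypos by eventually_elim (use ln_le_minus_one in \<open>fastforce simp: g_def\<close>)
  have gnn: "(\<integral>\<^sup>+x. ennreal (g x) \<partial>M) = ennreal c" using c by (simp add: CC_def g_def)
  have gint: "integrable M g" by (rule integrableI_nn_integral_finite[OF gm g0 gnn])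
  have "ennreal (expectation g) = ennreal c"
    using nn_integral_eq_integral[OF gint g0] gnn by simp
  then have Eg: "expectation g = c"
    using c integral_nonneg_AE[OF g0] by (simp add: ennreal_inj)
  have lneq: "\<And>x. ln (Y x) = Y x - 1 - g x" by (simp add: g_def)
  have lnint: "integrable M (\<lambda>x. ln (Y x))"
    unfolding lneq using gint Yint by auto
  have Eln: "expectation (\<lambda>x. ln (Y x)) = - c"
    unfolding lneq using gint Yint Y1 Eg
    by (simp add: Bochner_Integration.integral_diff prob_space)
  define t where "t = 1 / p"
  have t: "0 < t" "t \<le> 1" using assms by (auto simp: t_def)
  have Xint: "integrable M (\<lambda>x. t * ln (Y x))" using lnint by auto
  have expeq: "AE x in M. exp (t * ln (Y x)) = Y x powr t"
    using Ypos by eventually_elim (auto simp: powr_def)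
  have m1: "(\<lambda>x. exp (t * ln (Y x))) \<in> borel_measurable M" by measurable
  have m2: "(\<lambda>x. Y x powr t) \<in> borel_measurable M" by measurable
  have qint: "integrable M (\<lambda>x. exp (t * ln (Y x)))"
    using integrable_cong_AE[OF m1 m2 expeq] phi_int[OF t] by simp
  have "exp (expectation (\<lambda>x. t * ln (Y x))) \<le> expectation (\<lambda>x. exp (t * ln (Y x)))"
    by (rule jensens_inequality[OF Xint, where I=UNIV]) (auto intro: qint exp_convex)
  also have "\<dots> = phi t" unfolding phi_def by (rule integral_cong_AE[OF m1 m2 expeq])
  finally have "exp (- t * c) \<le> phi t" using Eln by simp
  then have "- t * c \<le> ln (phi t)" using phi_pos[OF t] by (simp add: ln_ge_iff)
  then have "- p * ln (phi t) \<le> - p * (- t * c)" using assms by (intro mult_left_mono_neg) auto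
  also have "\<dots> = c" using assms by (simp add: t_def)
  finally show ?thesis using c by (simp add: FF_def t_def)
qed

end

context ysetup begin

definition qn :: "nat \<Rightarrow> real" where "qn n = real (n + 2)"
definition gg where "gg n x = qn n * (1 - Y x powr (1 / qn n)) - (1 - Y x)"

lemma gg_nonneg: "0 < y \<Longrightarrow> 0 \<le> qn n * (1 - y powr (1 / qn n)) - (1 - y)"
  using mono_pw[of y 1 "qn n"] by (simp add: qn_def)

lemma gg_mono: "0 < y \<Longrightarrow> qn n * (1 - y powr (1 / qn n)) - (1 - y) \<le> qn (Suc n) * (1 - y powr (1 / qn (Suc n))) - (1 - y)"
  using mono_pw[of y "qn n" "qn (Suc n)"] by (simp add: qn_def)

lemma gg_lim: assumes "0 < y"
  shows "(\<lambda>n. qn n * (1 - y powr (1 / qn n)) - (1 - y)) \<longlonglongrightarrow> - ln y + y - 1"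
proof -
  have "\<And>n. y powr (1 / qn n) = exp (ln y / real (n + 2))"
    using assms by (simp add: powr_def qn_def)
  then have "(\<lambda>n. qn n * (1 - y powr (1 / qn n))) = (\<lambda>n. real (n + 2) * (1 - exp (ln y / real (n + 2))))"
    by (simp add: qn_def)
  then have "(\<lambda>n. qn n * (1 - y powr (1 / qn n))) \<longlonglongrightarrow> - ln y" using lim_pow by simp
  then have "(\<lambda>n. qn n * (1 - y powr (1 / qn n)) - (1 - y)) \<longlonglongrightarrow> - ln y - (1 - y)"
    by (intro tendsto_diff) auto
  moreover have "- ln y - (1 - y) = - ln y + y - 1" by simp
  ultimately show ?thesis by metis
qed

lemma SUP_gg: "AE x in M. (SUP n. ennreal (gg n x)) = ennreal (- ln (Y x) + Y x - 1)"
  using Ypos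
proof eventually_elim
  case (elim x)
  have inc: "incseq (\<lambda>n. ennreal (gg n x))"
    unfolding gg_def by (intro incseq_SucI ennreal_leI gg_mono elim)
  have lim: "(\<lambda>n. ennreal (gg n x)) \<longlonglongrightarrow> ennreal (- ln (Y x) + Y x - 1)"
    unfolding gg_def by (rule tendsto_ennrealI[OF gg_lim[OF elim]])
  show ?case by (rule SUP_Lim[OF inc lim])
qed

lemma gg_int: "integrable M (gg n)"
proof -
  have "0 < 1 / qn n" "1 / qn n \<le> 1" by (auto simp: qn_def)
  from phi_int[OF this] show ?thesis unfolding gg_def using Yint by auto
qed

lemma E_gg: "expectation (gg n) = qn n * (1 - phi (1 / qn n))"
proof -
  have "0 < 1 / qn n" "1 / qn n \<le> 1" by (auto simp: qn_def)
  from phi_int[OF this] show ?thesis unfolding gg_def phi_def using Yint Y1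
    by (simp add: Bochner_Integration.integral_diff prob_space)
qed

lemma G_le: "(\<integral>\<^sup>+x. ennreal (gg n x) \<partial>M) \<le> ennreal (FF (qn n))"
proof -
  have g0: "AE x in M. 0 \<le> gg n x" using Ypos by eventually_elim (unfold gg_def, rule gg_nonneg)
  have "(\<integral>\<^sup>+x. ennreal (gg n x) \<partial>M) = ennreal (qn n * (1 - phi (1 / qn n)))"
    using nn_integral_eq_integral[OF gg_int g0] E_gg by simp
  also have "\<dots> \<le> ennreal (FF (qn n))"
  proof (rule ennreal_leI)
    have "0 < phi (1 / qn n)" by (rule phi_pos) (auto simp: qn_def)
    then have "ln (phi (1 / qn n)) \<le> phi (1 / qn n) - 1" by (rule ln_le_minus_one)
    then have "qn n * (1 - phi (1 / qn n)) \<le> qn n * (- ln (phi (1 / qn n)))"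
      by (intro mult_left_mono) (auto simp: qn_def)
    then show "qn n * (1 - phi (1 / qn n)) \<le> FF (qn n)"
      unfolding FF_def by simp
  qed
  finally show ?thesis .
qed

lemma CC_SUP: "CC = (SUP n. \<integral>\<^sup>+x. ennreal (gg n x) \<partial>M)"
proof -
  have "CC = (\<integral>\<^sup>+x. (SUP n. ennreal (gg n x)) \<partial>M)"
    unfolding CC_def by (rule nn_integral_cong_AE) (use SUP_gg in \<open>auto elim!: eventually_mono\<close>)
  also have "\<dots> = (SUP n. \<integral>\<^sup>+x. ennreal (gg n x) \<partial>M)"
  proof (rule nn_integral_monotone_convergence_SUP_AE)
    show "AE x in M. ennreal (gg n x) \<le> ennreal (gg (Suc n) x)" for n
      using Ypos by eventually_elim (auto intro!: ennreal_leI gg_mono simp: gg_def)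
    show "(\<lambda>x. ennreal (gg n x)) \<in> borel_measurable M" for n
      unfolding gg_def by measurable
  qed
  finally show ?thesis .
qed

lemma core_main:
  "mono_on {2..} FF \<and> (\<forall>p\<ge>2. 0 \<le> FF p \<and> ereal (FF p) \<le> hh) \<and> ((\<lambda>p. ereal (FF p)) \<longlongrightarrow> hh) at_top"
proof (intro conjI allI impI)
  show "mono_on {2..} FF" by (rule mono_onI) (auto intro: FF_mono)
  show "0 \<le> FF p" if "2 \<le> p" for p using that by (intro FF_nonneg) auto
  show "ereal (FF p) \<le> hh" if "2 \<le> p" for p using that FF_le hh_CC by auto
  show "((\<lambda>p. ereal (FF p)) \<longlongrightarrow> hh) at_top"
  proof (rule order_tendstoI)
    fix a assume a: "hh < a"
    show "\<forall>\<^sub>F p in at_top. ereal (FF p) < a"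
      using eventually_ge_at_top[of "1::real"]
      by eventually_elim (use FF_le hh_CC a in \<open>auto intro: le_less_trans\<close>)
  next
    fix a assume a: "a < hh"
    show "\<forall>\<^sub>F p in at_top. a < ereal (FF p)"
    proof (cases "a < 0")
      case True
      show ?thesis using eventually_ge_at_top[of "1::real"]
        by eventually_elim (use True FF_nonneg in \<open>auto intro: less_le_trans\<close>)
    next
      case False
      have "a \<noteq> \<infinity>" using a by auto
      with False obtain a' where a': "a = ereal a'" "0 \<le> a'" by (cases a) auto
      have "ennreal a' < CC"
        using a a' hh_CC by (metis enn2ereal_ennreal less_ennreal.rep_eq)
      then obtain n where "ennreal a' < (\<integral>\<^sup>+x. ennreal (gg n x) \<partial>M)"
        unfolding CC_SUP by (auto simp: less_SUP_iff)
      then have "ennreal a' < ennreal (FF (qn n))" using G_le[of n] by (rule less_le_trans)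
      then have lt: "a' < FF (qn n)" using a' by (simp add: ennreal_less_iff)
      show ?thesis using eventually_ge_at_top[of "qn n"]
      proof eventually_elim
        case (elim p)
        have "FF (qn n) \<le> FF p" by (rule FF_mono) (use elim in \<open>auto simp: qn_def\<close>)
        then show ?case using lt a' by auto
      qed
    qed
  qed
qed

end

locale bsetup = prob_space M for M :: "'x measure" +
  fixes act :: "'g::group_add \<Rightarrow> 'x \<Rightarrow> 'x"
  assumes ga: "group_action M act"
    and ac1: "\<And>s. absolutely_continuous M (push M act s)"
    and ac2: "\<And>s. absolutely_continuous (push M act s) M"
begin

lemma act_meas[measurable]: "act s \<in> measurable M M"
  using ga by (simp add: group_action_def)

lemma act_inv: "x \<in> space M \<Longrightarrow> act (- s) (act s x) = x"
proof -
  assume x: "x \<in> space M"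
  have "act (- s + s) x = act (- s) (act s x)" using ga x unfolding group_action_def by blast
  moreover have "act 0 x = x" using ga x unfolding group_action_def by blast
  ultimately show ?thesis by simp
qed

abbreviation N where "N s \<equiv> push M act s"
abbreviation r where "r s \<equiv> RN_deriv M (N s)"
definition r' where "r' s x = enn2real (r s x)"

lemma sets_N[simp]: "sets (N s) = sets M" by (simp add: push_def)
lemma space_N[simp]: "space (N s) = space M" by (simp add: push_def)

lemma prob_N: "prob_space (N s)"
  unfolding push_def by (rule prob_space_distr) simp

lemma r'_meas[measurable]: "r' s \<in> borel_measurable M"
  unfolding r'_def by measurable

lemma dens: "density M (r s) = N s"
  by (rule density_RN_deriv[OF ac1 sets_N])

lemma fin: "AE x in M. r s x \<noteq> \<top>"
  using sigma_finite_measure.RN_deriv_finite[OF sigma_finite_measure_axioms prob_space_imp_sigma_finite[OF prob_N] ac1 sets_N]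
  by (simp add: infinity_ennreal_def)

lemma nz: "AE x in M. r s x \<noteq> 0"
proof -
  define Z where "Z = {x \<in> space M. r s x = 0}"
  have Z: "Z \<in> sets M" unfolding Z_def by measurable
  have "emeasure (N s) Z = emeasure (density M (r s)) Z" by (simp add: dens)
  also have "\<dots> = (\<integral>\<^sup>+x. r s x * indicator Z x \<partial>M)" by (rule emeasure_density) (auto simp: Z)
  also have "\<dots> = (\<integral>\<^sup>+x. 0 \<partial>M)" by (rule nn_integral_cong) (auto simp: Z_def indicator_def)
  finally have "Z \<in> null_sets (N s)" using Z by (simp add: null_sets_def)
  then have "Z \<in> null_sets M" using ac2[of s] by (auto simp: absolutely_continuous_def)
  from AE_not_in[OF this] AE_space show ?thesis by eventually_elim (auto simp: Z_def)
qed

lemma r_eq: "AE x in M. r s x = ennreal (r' s x) \<and> 0 < r' s x"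
  using fin[of s] nz[of s]
  by eventually_elim (auto simp: r'_def enn2real_positive_iff less_top[symmetric] ennreal_enn2real_if zero_less_iff_neq_zero)

lemma dens2: "density M (\<lambda>x. ennreal (1 / r' s (act s x))) = N (- s)"
proof (rule measure_eqI)
  show "sets (density M (\<lambda>x. ennreal (1 / r' s (act s x)))) = sets (N (- s))" by simp
  fix A assume "A \<in> sets (density M (\<lambda>x. ennreal (1 / r' s (act s x))))"
  then have A[measurable]: "A \<in> sets M" by simp
  define H where "H y = ennreal (1 / r' s y) * indicator A (act (- s) y)" for y
  have Hm[measurable]: "H \<in> borel_measurable M" unfolding H_def by measurable
  have "emeasure (density M (\<lambda>x. ennreal (1 / r' s (act s x)))) A
      = (\<integral>\<^sup>+x. ennreal (1 / r' s (act s x)) * indicator A x \<partial>M)"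
    by (rule emeasure_density) auto
  also have "\<dots> = (\<integral>\<^sup>+x. H (act s x) \<partial>M)"
    by (rule nn_integral_cong) (simp add: H_def act_inv)
  also have "\<dots> = (\<integral>\<^sup>+y. H y \<partial>N s)"
    unfolding push_def by (rule nn_integral_distr[symmetric]) auto
  also have "\<dots> = (\<integral>\<^sup>+y. r s y * H y \<partial>M)"
    by (subst dens[symmetric]) (rule nn_integral_density; measurable)
  also have "\<dots> = (\<integral>\<^sup>+y. indicator (act (- s) -` A \<inter> space M) y \<partial>M)"
  proof (rule nn_integral_cong_AE)
    show "AE y in M. r s y * H y = indicator (act (- s) -` A \<inter> space M) y"
      using r_eq[of s] AE_space
    proof eventually_elim
      case (elim y)
      then have "r s y * ennreal (1 / r' s y) = ennreal (r' s y * (1 / r' s y))"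
        by (simp add: ennreal_mult[symmetric] del: ennreal_mult)
      also have "\<dots> = 1" using elim by simp
      finally show ?case using elim by (auto simp: H_def indicator_def)
    qed
  qed
  also have "\<dots> = emeasure M (act (- s) -` A \<inter> space M)"
    by (rule nn_integral_indicator) measurable
  also have "\<dots> = emeasure (N (- s)) A"
    unfolding push_def by (rule emeasure_distr[symmetric]) auto
  finally show "emeasure (density M (\<lambda>x. ennreal (1 / r' s (act s x)))) A = emeasure (N (- s)) A" .
qed

lemma rho_eq: "AE x in M. rho M act s x = 1 / r' s (act s x)"
proof -
  have "AE x in M. ennreal (1 / r' s (act s x)) = RN_deriv M (N (- s)) x"
    by (rule RN_deriv_unique[OF _ dens2]) measurable
  then show ?thesis
  proof eventually_elim
    case (elim x)
    have "rho M act s x = enn2real (r (- s) x)" by (simp add: rho_def)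
    also have "\<dots> = enn2real (ennreal (1 / r' s (act s x)))" using elim by simp
    also have "\<dots> = 1 / r' s (act s x)" by (simp add: r'_def)
    finally show ?case .
  qed
qed

lemma cov:
  assumes g[measurable]: "g \<in> borel_measurable borel"
  shows "(\<integral>\<^sup>+x. g (rho M act s x) \<partial>M) = (\<integral>\<^sup>+x. ennreal (r' s x) * g (1 / r' s x) \<partial>M)"
proof -
  have "(\<integral>\<^sup>+x. ennreal (r' s x) * g (1 / r' s x) \<partial>M) = (\<integral>\<^sup>+x. r s x * g (1 / r' s x) \<partial>M)"
    by (rule nn_integral_cong_AE) (use r_eq[of s] in \<open>auto elim!: eventually_mono\<close>)
  also have "\<dots> = (\<integral>\<^sup>+y. g (1 / r' s y) \<partial>N s)"
    by (subst dens[symmetric]) (rule nn_integral_density[symmetric]; measurable)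
  also have "\<dots> = (\<integral>\<^sup>+x. g (1 / r' s (act s x)) \<partial>M)"
    unfolding push_def by (rule nn_integral_distr) auto
  also have "\<dots> = (\<integral>\<^sup>+x. g (rho M act s x) \<partial>M)"
    by (rule nn_integral_cong_AE) (use rho_eq[of s] in \<open>auto elim!: eventually_mono\<close>)
  finally show ?thesis by simp
qed

end

lemma meas_pmf_pair:
  fixes f :: "'g::countable \<times> 'x \<Rightarrow> 'b"
  assumes "\<And>s. (\<lambda>x. f (s, x)) \<in> measurable M K"
  shows "f \<in> measurable (measure_pmf \<mu> \<Otimes>\<^sub>M M) K"
proof -
  have "f \<in> measurable (count_space UNIV \<Otimes>\<^sub>M M) K"
    by (rule measurable_pair_measure_countable1) (auto simp: assms)
  moreover have "measurable (measure_pmf \<mu> \<Otimes>\<^sub>M M) K = measurable (count_space UNIV \<Otimes>\<^sub>M M) K"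
    by (intro measurable_cong_sets sets_pair_measure_cong) simp_all
  ultimately show ?thesis by simp
qed

lemma meas_pair_pmf:
  fixes f :: "'x \<times> 'g::countable \<Rightarrow> 'b"
  assumes "\<And>s. (\<lambda>x. f (x, s)) \<in> measurable M K"
  shows "f \<in> measurable (M \<Otimes>\<^sub>M measure_pmf \<mu>) K"
proof -
  have "(\<lambda>(x, y). f (y, x)) \<in> measurable (measure_pmf \<mu> \<Otimes>\<^sub>M M) K"
    by (rule meas_pmf_pair) (simp add: assms)
  then show ?thesis using measurable_pair_swap_iff[of f M "measure_pmf \<mu>" K] by simp
qed

locale bsetup2 = bsetup M act for M :: "'x measure" and act :: "'g::{group_add,countable} \<Rightarrow> 'x \<Rightarrow> 'x" +
  fixes \<mu> :: "'g pmf"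
begin

abbreviation \<Omega> where "\<Omega> \<equiv> measure_pmf \<mu> \<Otimes>\<^sub>M M"
definition Yf where "Yf \<omega> = rho M act (fst \<omega>) (snd \<omega>)"

sublocale P: pair_prob_space "measure_pmf \<mu>" M
  by (intro pair_prob_space.intro pair_sigma_finite.intro prob_space_imp_sigma_finite
        prob_space_measure_pmf prob_space_axioms)

lemma rho_meas[measurable]: "rho M act s \<in> borel_measurable M"
  unfolding rho_def[abs_def] by measurable

lemma Yf_meas[measurable]: "Yf \<in> borel_measurable \<Omega>"
  unfolding Yf_def by (rule meas_pmf_pair) simp

lemma Omega_nn:
  assumes g[measurable]: "g \<in> borel_measurable borel"
  shows "(\<integral>\<^sup>+\<omega>. g (Yf \<omega>) \<partial>\<Omega>) = (\<integral>\<^sup>+s. (\<integral>\<^sup>+x. g (rho M act s x) \<partial>M) \<partial>measure_pmf \<mu>)"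
proof -
  have "(\<lambda>\<omega>. g (Yf \<omega>)) \<in> borel_measurable \<Omega>" by measurable
  from nn_integral_fst[OF this] show ?thesis by (simp add: Yf_def)
qed

lemma rho_int1: "(\<integral>\<^sup>+x. ennreal (rho M act s x) \<partial>M) = 1"
proof -
  have "(\<integral>\<^sup>+x. ennreal (rho M act s x) \<partial>M) = (\<integral>\<^sup>+x. r (- s) x * 1 \<partial>M)"
    by (rule nn_integral_cong_AE) (use fin[of "- s"] in \<open>auto elim!: eventually_mono simp: rho_def ennreal_enn2real_if\<close>)
  also have "\<dots> = (\<integral>\<^sup>+x. 1 \<partial>N (- s))"
    by (rule RN_deriv_nn_integral[symmetric, OF ac1 sets_N]) simp
  also have "\<dots> = 1" using prob_space.emeasure_space_1[OF prob_N] by simp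
  finally show ?thesis .
qed

lemma ysetup: "ysetup \<Omega> Yf"
proof -
  have Y0: "\<And>\<omega>. 0 \<le> Yf \<omega>" by (simp add: Yf_def rho_def)
  have pos: "AE \<omega> in \<Omega>. 0 < Yf \<omega>"
  proof (rule P.AE_pair_measure)
    show "{\<omega> \<in> space \<Omega>. 0 < Yf \<omega>} \<in> sets \<Omega>" by measurable
    show "AE s in measure_pmf \<mu>. AE x in M. 0 < Yf (s, x)"
    proof (rule AE_I2)
      fix s
      show "AE x in M. 0 < Yf (s, x)"
        using r_eq[of "- s"] by eventually_elim (simp add: Yf_def rho_def r'_def)
    qed
  qed
  have nn1: "(\<integral>\<^sup>+\<omega>. ennreal (Yf \<omega>) \<partial>\<Omega>) = ennreal 1"
    by (subst Omega_nn) (simp_all add: rho_int1)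
  have int: "integrable \<Omega> Yf"
    by (rule integrableI_nn_integral_finite[OF Yf_meas _ nn1]) (simp add: Y0)
  have "ennreal (integral\<^sup>L \<Omega> Yf) = ennreal 1"
    using nn_integral_eq_integral[OF int] nn1 Y0 by simp
  then have E1: "integral\<^sup>L \<Omega> Yf = 1"
    using integral_nonneg_AE[of Yf \<Omega>] Y0 by (simp add: ennreal_inj)
  show ?thesis
    by (intro ysetup.intro ysetup_axioms.intro P.prob_space_axioms Yf_meas pos int E1 Y0)
qed

end

lemma powr_split:
  fixes r t :: real assumes "0 \<le> r" "0 < t" "t < 1"
  shows "r powr (1 - t) = r * (1 / r) powr t"
proof (cases "r = 0")
  case True then show ?thesis using assms by simp
next
  case False
  have "r powr (1 - t) = r powr (1 + (- t))" by simp
  also have "\<dots> = r powr 1 * r powr (- t)" by (rule powr_add)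
  also have "\<dots> = r * (1 / r) powr t" using assms False by (simp add: powr_minus_divide powr_divide)
  finally show ?thesis .
qed

context bsetup2 begin

sublocale Y: ysetup \<Omega> Yf by (rule ysetup)

lemma pairing_eq:
  assumes p: "2 \<le> p"
  shows "pairing M (koopman_mu \<mu> M act (p / (p - 1)) (\<lambda>_. 1)) (\<lambda>_. 1) = Y.phi (1 / p)"
proof -
  define t where "t = 1 / p"
  define a where "a = 1 - t"
  have t: "0 < t" "t < 1" "t \<le> 1" using p by (auto simp: t_def)
  have ha: "1 / (p / (p - 1)) = a" "(p - 1) / p = a" using p by (simp_all add: a_def t_def field_simps)
  define I where "I x = (\<integral>\<^sup>+s. ennreal (r' s x powr a) \<partial>measure_pmf \<mu>)" for x
  have unf: "pairing M (koopman_mu \<mu> M act (p / (p - 1)) (\<lambda>_. 1)) (\<lambda>_. 1)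
      = (\<integral>x. (\<integral>s. r' s x powr a \<partial>measure_pmf \<mu>) \<partial>M)"
    by (simp add: pairing_def koopman_mu_def koopman_def r'_def ha)
  have inner: "(\<integral>s. r' s x powr a \<partial>measure_pmf \<mu>) = enn2real (I x)" for x
    unfolding I_def by (rule integral_eq_nn_integral) auto
  have jm: "(\<lambda>(s, x). ennreal (r' s x powr a)) \<in> borel_measurable \<Omega>"
    by (rule meas_pmf_pair) simp
  have jm2: "(\<lambda>(x, s). ennreal (r' s x powr a)) \<in> borel_measurable (M \<Otimes>\<^sub>M measure_pmf \<mu>)"
    by (rule meas_pair_pmf) simp
  have Im[measurable]: "I \<in> borel_measurable M"
    unfolding I_def by (rule P.M1.borel_measurable_nn_integral) (use jm2 in simp)
  have pers: "(\<integral>\<^sup>+x. ennreal (r' s x powr a) \<partial>M) = (\<integral>\<^sup>+x. ennreal (rho M act s x powr t) \<partial>M)" for s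
  proof -
    have "(\<integral>\<^sup>+x. ennreal (rho M act s x powr t) \<partial>M) = (\<integral>\<^sup>+x. ennreal (r' s x) * ennreal ((1 / r' s x) powr t) \<partial>M)"
      by (rule cov) measurable
    also have "\<dots> = (\<integral>\<^sup>+x. ennreal (r' s x powr a) \<partial>M)"
    proof (rule nn_integral_cong)
      fix x
      have r0: "0 \<le> r' s x" by (simp add: r'_def)
      have "ennreal (r' s x) * ennreal ((1 / r' s x) powr t) = ennreal (r' s x * (1 / r' s x) powr t)"
        using r0 by (simp add: ennreal_mult[symmetric] del: ennreal_mult)
      also have "\<dots> = ennreal (r' s x powr a)" using powr_split[OF r0 t(1,2)] by (simp add: a_def)
      finally show "ennreal (r' s x) * ennreal ((1 / r' s x) powr t) = ennreal (r' s x powr a)" .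
    qed
    finally show ?thesis by simp
  qed
  have phi0: "0 \<le> Y.phi t" using Y.phi_pos[OF t(1,3)] by simp
  have totI: "(\<integral>\<^sup>+x. I x \<partial>M) = ennreal (Y.phi t)"
  proof -
    have "(\<integral>\<^sup>+x. I x \<partial>M) = (\<integral>\<^sup>+s. (\<integral>\<^sup>+x. ennreal (r' s x powr a) \<partial>M) \<partial>measure_pmf \<mu>)"
      unfolding I_def by (rule P.Fubini') (use jm in simp)
    also have "\<dots> = (\<integral>\<^sup>+s. (\<integral>\<^sup>+x. ennreal (rho M act s x powr t) \<partial>M) \<partial>measure_pmf \<mu>)"
      by (simp add: pers)
    also have "\<dots> = (\<integral>\<^sup>+\<omega>. ennreal (Yf \<omega> powr t) \<partial>\<Omega>)"
      by (rule Omega_nn[symmetric]) measurable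
    also have "\<dots> = ennreal (Y.phi t)"
      unfolding Y.phi_def by (rule nn_integral_eq_integral[OF Y.phi_int[OF t(1,3)]]) auto
    finally show ?thesis .
  qed
  have Ifin: "AE x in M. I x \<noteq> \<top>"
    using nn_integral_PInf_AE[OF Im] totI by (simp add: infinity_ennreal_def)
  have "(\<integral>x. enn2real (I x) \<partial>M) = enn2real (\<integral>\<^sup>+x. ennreal (enn2real (I x)) \<partial>M)"
    by (rule integral_eq_nn_integral) auto
  also have "\<dots> = enn2real (\<integral>\<^sup>+x. I x \<partial>M)"
    by (rule arg_cong[where f=enn2real], rule nn_integral_cong_AE)
       (use Ifin in \<open>auto elim!: eventually_mono simp: ennreal_enn2real_if\<close>)
  also have "\<dots> = Y.phi t" using totI phi0 by simp
  finally show ?thesis by (simp add: unf inner t_def)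
qed

lemma hh_eq: "Y.hh = furstenberg_entropy \<mu> M act"
proof -
  have m1: "(\<lambda>y::real. ennreal (- ln y)) \<in> borel_measurable borel" by measurable
  have m2: "(\<lambda>y::real. ennreal (ln y)) \<in> borel_measurable borel" by measurable
  show ?thesis unfolding Y.hh_def furstenberg_entropy_def
    by (simp only: Omega_nn[OF m1] Omega_nn[OF m2])
qed

end

theorem proposition6p1:
  fixes \<mu> :: "'g::{group_add,countable} pmf"
    and M :: "'x::polish_space measure"
    and act :: "'g \<Rightarrow> 'x \<Rightarrow> 'x"
  assumes "stationary_space \<mu> M act"
  defines "F \<equiv> (\<lambda>p::real. - p * ln (pairing M (koopman_mu \<mu> M act (p / (p - 1)) (\<lambda>_. 1)) (\<lambda>_. 1)))"
  shows "mono_on {2..} F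
         \<and> (\<forall>p\<ge>2. 0 \<le> F p \<and> ereal (F p) \<le> furstenberg_entropy \<mu> M act)
         \<and> (nondegenerate \<mu> \<longrightarrow> ((\<lambda>p. ereal (F p)) \<longlongrightarrow> furstenberg_entropy \<mu> M act) at_top)"
proof -
  have ps: "prob_space M" and na: "nonsingular_action M act"
    using assms(1) by (auto simp: stationary_space_def standard_prob_space_def)
  interpret B: bsetup2 M act \<mu>
    using ps na by (intro bsetup2.intro bsetup.intro bsetup_axioms.intro) (auto simp: nonsingular_action_def)
  have FF: "F p = B.Y.FF p" if "2 \<le> p" for p
    using B.pairing_eq[OF that] by (simp add: F_def B.Y.FF_def)
  have main: "mono_on {2..} B.Y.FF \<and> (\<forall>p\<ge>2. 0 \<le> B.Y.FF p \<and> ereal (B.Y.FF p) \<le> B.Y.hh)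
       \<and> ((\<lambda>p. ereal (B.Y.FF p)) \<longlongrightarrow> B.Y.hh) at_top"
    by (rule B.Y.core_main)
  have m: "mono_on {2..} F"
    using main FF unfolding mono_on_def by auto
  have b: "\<forall>p\<ge>2. 0 \<le> F p \<and> ereal (F p) \<le> furstenberg_entropy \<mu> M act"
    using main FF B.hh_eq by auto
  have "((\<lambda>p. ereal (F p)) \<longlongrightarrow> furstenberg_entropy \<mu> M act) at_top"
  proof -
    have ev: "\<forall>\<^sub>F p in at_top. ereal (B.Y.FF p) = ereal (F p)"
      using eventually_ge_at_top[of "2::real"] by eventually_elim (simp add: FF)
    show ?thesis using main B.hh_eq tendsto_cong[OF ev] by auto
  qed
  then show ?thesis using m b by auto
qed

end
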